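(* Let $\mu\in\mathbb{R}$ and $\alpha>0$, and define $\gamma_{\mu,\alpha}:(-\infty,-2|\mu|]\cup[2|\mu|,\infty)\to\mathbb{R}$ by letting $\gamma_{\mu,\alpha}(y)$ be the unique $x\in\mathbb{R}$ with $x=\mu\log|x+iy|-\log\alpha$. Then: (i) $\gamma_{\mu,\alpha}$ is continuously differentiable; (ii) if $\mu>0$ then $\gamma_{\mu,\alpha}(y)\to\infty$ as $|y|\to\infty$; if $\mu<0$ then $\gamma_{\mu,\alpha}(y)\to-\infty$ as $|y|\to\infty$; if $\mu=0$ then $\gamma_{\mu,\alpha}\equiv-\log\alpha$; (iii) $|\gamma_{\mu,\alpha}'(y)|\le2|\mu|/|y|$; in particular $\gamma_{\mu,\alpha}'(y)\to0$ as $|y|\to\infty$ uniformly in $\alpha$; (iv) for $\alpha>\beta>0$ and all $y$ in the domain, $$\tfrac23\log\tfrac{\alpha}{\beta}\le\gamma_{\mu,\beta}(y)-\gamma_{\mu,\alpha}(y)\le2\log\tfrac{\alpha}{\beta},\qquad \lim_{|y|\to\infty}(\gamma_{\mu,\beta}(y)-\gamma_{\mu,\alpha}(y))=\log\tfrac{\alpha}{\beta}.$$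
   Context: For $|y|\ge2|\mu|$ there is indeed a unique $x$ with $x=\mu\log|x+iy|-\log\alpha$. *)

theory Defs
  imports "HOL-Analysis.Analysis"
begin

definition gdom :: "real \<Rightarrow> real set" where
  "gdom \<mu> = {y. \<bar>y\<bar> \<ge> 2 * \<bar>\<mu>\<bar>}"

definition gam :: "real \<Rightarrow> real \<Rightarrow> real \<Rightarrow> real" where
  "gam \<mu> \<alpha> y = (THE x. x = \<mu> * ln (cmod (Complex x y)) - ln \<alpha>)"

end

theory Submission
  imports Defs
begin


lemma lc_eq: "y \<noteq> 0 \<Longrightarrow> ln (cmod (Complex x y)) = ln (x\<^sup>2 + y\<^sup>2) / 2"
  by (simp add: norm_complex_def ln_sqrt)

lemma sq_bound: "(y::real) \<noteq> 0 \<Longrightarrow> \<bar>z\<bar> / (z\<^sup>2 + y\<^sup>2) \<le> 1 / (2 * \<bar>y\<bar>)"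
proof -
  assume y: "y \<noteq> 0"
  have "0 \<le> (\<bar>z\<bar> - \<bar>y\<bar>)\<^sup>2" by simp
  hence "2 * \<bar>z\<bar> * \<bar>y\<bar> \<le> z\<^sup>2 + y\<^sup>2" by (simp add: power2_eq_square algebra_simps)
  moreover have "z\<^sup>2 + y\<^sup>2 > 0" using y by (simp add: sum_power2_gt_zero_iff)
  ultimately show ?thesis using y by (simp add: field_simps)
qed

lemma lc_lip_lt:
  assumes y: "y \<noteq> 0" and ab: "a < b"
  shows "\<bar>ln (cmod (Complex b y)) - ln (cmod (Complex a y))\<bar> \<le> \<bar>b - a\<bar> / (2 * \<bar>y\<bar>)"
proof -
  have pos: "t\<^sup>2 + y\<^sup>2 > 0" for t using y by (simp add: sum_power2_gt_zero_iff)
  have d: "DERIV (\<lambda>t. ln (t\<^sup>2 + y\<^sup>2) / 2) t :> t / (t\<^sup>2 + y\<^sup>2)" for t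
    using pos[of t] by (auto intro!: derivative_eq_intros simp: divide_simps)
  obtain z where z: "a < z" "z < b"
    "ln (b\<^sup>2 + y\<^sup>2) / 2 - ln (a\<^sup>2 + y\<^sup>2) / 2 = (b - a) * (z / (z\<^sup>2 + y\<^sup>2))"
    using MVT2[OF ab, of "\<lambda>t. ln (t\<^sup>2 + y\<^sup>2) / 2", OF d] by blast
  have "\<bar>(b - a) * (z / (z\<^sup>2 + y\<^sup>2))\<bar> = \<bar>b - a\<bar> * (\<bar>z\<bar> / (z\<^sup>2 + y\<^sup>2))"
    using pos[of z] by (simp add: abs_mult)
  also have "\<dots> \<le> \<bar>b - a\<bar> * (1 / (2 * \<bar>y\<bar>))"
    by (rule mult_left_mono[OF sq_bound[OF y]]) simp
  finally show ?thesis using z(3) by (simp add: lc_eq[OF y])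
qed

lemma lc_lip:
  assumes y: "y \<noteq> 0"
  shows "\<bar>ln (cmod (Complex b y)) - ln (cmod (Complex a y))\<bar> \<le> \<bar>b - a\<bar> / (2 * \<bar>y\<bar>)"
proof (cases a b rule: linorder_cases)
  case less then show ?thesis using lc_lip_lt[OF y] by blast
next
  case equal then show ?thesis by simp
next
  case greater then show ?thesis using lc_lip_lt[OF y greater] by (simp add: abs_minus_commute)
qed

lemma Phi_lip:
  assumes y: "\<bar>\<mu>\<bar> < \<bar>y\<bar>"
  shows "\<bar>\<mu> * ln (cmod (Complex b y)) - \<mu> * ln (cmod (Complex a y))\<bar> \<le> \<bar>\<mu>\<bar> / (2 * \<bar>y\<bar>) * \<bar>b - a\<bar>"
proof -
  have y0: "y \<noteq> 0" using y by auto
  have "\<bar>\<mu> * ln (cmod (Complex b y)) - \<mu> * ln (cmod (Complex a y))\<bar>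
     = \<bar>\<mu>\<bar> * \<bar>ln (cmod (Complex b y)) - ln (cmod (Complex a y))\<bar>"
    by (metis abs_mult right_diff_distrib)
  also have "\<dots> \<le> \<bar>\<mu>\<bar> * (\<bar>b - a\<bar> / (2 * \<bar>y\<bar>))"
    by (rule mult_left_mono[OF lc_lip[OF y0]]) simp
  finally show ?thesis by simp
qed

lemma ex1_sol:
  assumes "\<mu> = 0 \<or> \<bar>\<mu>\<bar> < \<bar>y\<bar>"
  shows "\<exists>!x. x = \<mu> * ln (cmod (Complex x y)) - c"
proof (cases "\<mu> = 0")
  case True then show ?thesis by simp
next
  case False
  hence y: "\<bar>\<mu>\<bar> < \<bar>y\<bar>" using assms by auto
  hence y0: "y \<noteq> 0" by auto
  define k where "k = \<bar>\<mu>\<bar> / (2 * \<bar>y\<bar>)"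
  have k: "0 \<le> k" "k < 1/2" using y by (auto simp: k_def field_simps)
  define F where "F x = x - \<mu> * ln (cmod (Complex x y)) + c" for x
  have lip: "\<bar>(F b - F a) - (b - a)\<bar> \<le> k * \<bar>b - a\<bar>" for a b
    using Phi_lip[OF y, of b a] unfolding F_def k_def by (simp add: abs_minus_commute algebra_simps)
  have cont: "continuous_on S F" for S
    unfolding F_def using y0 by (auto intro!: continuous_intros simp: complex_eq_iff)
  define M where "M = 2 * \<bar>F 0\<bar>"
  have "F M \<ge> 0"
  proof -
    have "F M - F 0 \<ge> M - k * M" using lip[of 0 M] unfolding M_def by auto
    moreover have "k * M \<le> 1/2 * M" using k unfolding M_def by (intro mult_right_mono) auto
    ultimately show ?thesis unfolding M_def by auto
  qed
  moreover have "F (-M) \<le> 0"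
  proof -
    have "F (-M) - F 0 \<le> -M + k * M" using lip[of 0 "-M"] unfolding M_def by auto
    moreover have "k * M \<le> 1/2 * M" using k unfolding M_def by (intro mult_right_mono) auto
    ultimately show ?thesis unfolding M_def by auto
  qed
  ultimately obtain x where "F x = 0" using IVT'[of F "-M" 0 M, OF _ _ _ cont] unfolding M_def by auto
  hence ex: "x = \<mu> * ln (cmod (Complex x y)) - c" unfolding F_def by simp
  have uniq: "a = b" if "F a = 0" "F b = 0" for a b
  proof -
    have "\<bar>b - a\<bar> \<le> k * \<bar>b - a\<bar>" using lip[of a b] that by (simp add: abs_minus_commute)
    moreover have "k * \<bar>b - a\<bar> \<le> 1/2 * \<bar>b - a\<bar>" using k by (intro mult_right_mono) auto
    ultimately have "\<bar>b - a\<bar> \<le> 0" using order.trans[of "\<bar>b - a\<bar>" "k * \<bar>b - a\<bar>" "1/2 * \<bar>b - a\<bar>"] by simp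
    thus ?thesis by simp
  qed
  show ?thesis
  proof
    show "x = \<mu> * ln (cmod (Complex x y)) - c" by (fact ex)
  next
    fix z assume "z = \<mu> * ln (cmod (Complex z y)) - c"
    hence "F z = 0" unfolding F_def by simp
    thus "z = x" using uniq \<open>F x = 0\<close> by blast
  qed
qed

lemma gam_eq:
  assumes "\<mu> = 0 \<or> \<bar>\<mu>\<bar> < \<bar>y\<bar>"
  shows "gam \<mu> \<alpha> y = \<mu> * ln (cmod (Complex (gam \<mu> \<alpha> y) y)) - ln \<alpha>"
  unfolding gam_def by (rule theI'[OF ex1_sol[OF assms]])

lemma gam_zero: "gam 0 \<alpha> y = - ln \<alpha>"
  unfolding gam_def by simp

lemma gam_neg: "gam \<mu> \<alpha> (-y) = gam \<mu> \<alpha> y"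
proof -
  have "cmod (Complex x (-y)) = cmod (Complex x y)" for x by (simp add: norm_complex_def)
  thus ?thesis unfolding gam_def by simp
qed



lemma mux_bound:
  assumes "(y::real) \<noteq> 0"
  shows "\<bar>\<mu> * x\<bar> \<le> \<bar>\<mu>\<bar> / (2 * \<bar>y\<bar>) * (x\<^sup>2 + y\<^sup>2)"
proof -
  have N: "x\<^sup>2 + y\<^sup>2 > 0" using assms by (simp add: sum_power2_gt_zero_iff)
  have "\<bar>x\<bar> \<le> (x\<^sup>2 + y\<^sup>2) / (2 * \<bar>y\<bar>)"
    using sq_bound[OF assms, of x] N assms by (simp add: field_simps)
  hence "\<bar>\<mu>\<bar> * \<bar>x\<bar> \<le> \<bar>\<mu>\<bar> * ((x\<^sup>2 + y\<^sup>2) / (2 * \<bar>y\<bar>))"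
    by (rule mult_left_mono) simp
  thus ?thesis by (simp add: abs_mult)
qed

lemma den_pos:
  assumes "\<bar>\<mu>\<bar> < \<bar>y::real\<bar>"
  shows "(x\<^sup>2 + y\<^sup>2) / 2 < x\<^sup>2 + y\<^sup>2 - \<mu> * x"
proof -
  have y0: "y \<noteq> 0" using assms by auto
  have N: "x\<^sup>2 + y\<^sup>2 > 0" using y0 by (simp add: sum_power2_gt_zero_iff)
  have k: "\<bar>\<mu>\<bar> / (2 * \<bar>y\<bar>) < 1/2" using assms by (simp add: field_simps)
  have "\<bar>\<mu>\<bar> / (2 * \<bar>y\<bar>) * (x\<^sup>2 + y\<^sup>2) < 1/2 * (x\<^sup>2 + y\<^sup>2)"
    by (rule mult_strict_right_mono[OF k N])
  moreover have "\<mu> * x \<le> \<bar>\<mu> * x\<bar>" by (rule abs_ge_self)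
  ultimately have "\<mu> * x < 1/2 * (x\<^sup>2 + y\<^sup>2)" using mux_bound[OF y0, of \<mu> x] by linarith
  thus ?thesis by simp
qed

lemma aux3: "(u::real) = A + B \<Longrightarrow> \<bar>A\<bar> \<le> 1/2 * \<bar>u\<bar> \<Longrightarrow> \<bar>u\<bar> \<le> 2 * \<bar>B\<bar>"
  by linarith

lemma gam_isCont:
  assumes mu: "\<mu> \<noteq> 0" and y: "\<bar>\<mu>\<bar> < \<bar>y\<bar>"
  shows "isCont (gam \<mu> \<alpha>) y"
proof -
  define g where "g = gam \<mu> \<alpha>"
  define x where "x = g y"
  have y0: "y \<noteq> 0" using y by auto
  have ev: "eventually (\<lambda>z. \<bar>\<mu>\<bar> < \<bar>z\<bar>) (at y)"
    using order_tendstoD(1)[OF tendsto_rabs[OF tendsto_ident_at] y] .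
  have bound: "norm (g z - g y) \<le> 2 * \<bar>\<mu> * ln (cmod (Complex x z)) - \<mu> * ln (cmod (Complex x y))\<bar>"
    if z: "\<bar>\<mu>\<bar> < \<bar>z\<bar>" for z
  proof -
    have e1: "g z = \<mu> * ln (cmod (Complex (g z) z)) - ln \<alpha>" unfolding g_def using gam_eq z by blast
    have e2: "x = \<mu> * ln (cmod (Complex x y)) - ln \<alpha>" unfolding x_def g_def using gam_eq y by blast
    have l: "\<bar>\<mu> * ln (cmod (Complex (g z) z)) - \<mu> * ln (cmod (Complex x z))\<bar> \<le> \<bar>\<mu>\<bar> / (2 * \<bar>z\<bar>) * \<bar>g z - x\<bar>"
      by (rule Phi_lip[OF z])
    have k: "\<bar>\<mu>\<bar> / (2 * \<bar>z\<bar>) \<le> 1/2" using z by (simp add: field_simps)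
    have "\<bar>\<mu>\<bar> / (2 * \<bar>z\<bar>) * \<bar>g z - x\<bar> \<le> 1/2 * \<bar>g z - x\<bar>"
      by (rule mult_right_mono[OF k]) simp
    with l have l2: "\<bar>\<mu> * ln (cmod (Complex (g z) z)) - \<mu> * ln (cmod (Complex x z))\<bar> \<le> 1/2 * \<bar>g z - x\<bar>"
      by linarith
    have "g z - x = (\<mu> * ln (cmod (Complex (g z) z)) - \<mu> * ln (cmod (Complex x z)))
        + (\<mu> * ln (cmod (Complex x z)) - \<mu> * ln (cmod (Complex x y)))"
      using e1 e2 by linarith
    from aux3[OF this l2] show ?thesis unfolding x_def[symmetric] by (simp only: real_norm_def)
  qed
  have N: "x\<^sup>2 + y\<^sup>2 > 0" using y0 by (simp add: sum_power2_gt_zero_iff)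
  have c: "isCont (\<lambda>z. \<mu> * (ln (x\<^sup>2 + z\<^sup>2) / 2)) y"
    using N by (auto intro!: continuous_intros)
  hence "((\<lambda>z. \<mu> * (ln (x\<^sup>2 + z\<^sup>2) / 2)) \<longlongrightarrow> \<mu> * (ln (x\<^sup>2 + y\<^sup>2) / 2)) (at y)"
    by (simp add: isCont_def)
  hence t0: "((\<lambda>z. \<mu> * (ln (x\<^sup>2 + z\<^sup>2) / 2) - \<mu> * (ln (x\<^sup>2 + y\<^sup>2) / 2)) \<longlongrightarrow> 0) (at y)"
    by (simp add: LIM_zero_iff)
  have t1: "((\<lambda>z. 2 * \<bar>\<mu> * (ln (x\<^sup>2 + z\<^sup>2) / 2) - \<mu> * (ln (x\<^sup>2 + y\<^sup>2) / 2)\<bar>) \<longlongrightarrow> 0) (at y)"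
    using tendsto_mult_right_zero[OF tendsto_rabs_zero[OF t0], of 2] by simp
  have ev2: "eventually (\<lambda>z. norm (g z - g y) \<le> 2 * \<bar>\<mu> * (ln (x\<^sup>2 + z\<^sup>2) / 2) - \<mu> * (ln (x\<^sup>2 + y\<^sup>2) / 2)\<bar>) (at y)"
    using ev
  proof eventually_elim
    case (elim z)
    hence "z \<noteq> 0" by auto
    thus ?case using bound[OF elim] y0 by (simp add: lc_eq)
  qed
  have "((\<lambda>z. g z - g y) \<longlongrightarrow> 0) (at y)"
    by (rule Lim_null_comparison[OF ev2 t1])
  thus ?thesis unfolding g_def isCont_def by (simp add: LIM_zero_iff)
qed

lemma gam_deriv_pos:
  assumes mu: "\<mu> \<noteq> 0" and y: "\<bar>\<mu>\<bar> < y" and a: "\<alpha> > 0"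
  shows "DERIV (gam \<mu> \<alpha>) y :> \<mu> * y / ((gam \<mu> \<alpha> y)\<^sup>2 + y\<^sup>2 - \<mu> * gam \<mu> \<alpha> y)"
proof -
  define g where "g = gam \<mu> \<alpha>"
  define x where "x = g y"
  define \<psi> where "\<psi> t = sqrt (exp (2 * (t + ln \<alpha>) / \<mu>) - t\<^sup>2)" for t
  have y0: "y > 0" using y by auto
  have inv: "\<psi> (g z) = z" if "\<bar>\<mu>\<bar> < z" for z
  proof -
    have z0: "z > 0" "z \<noteq> 0" using that by auto
    have Np: "(g z)\<^sup>2 + z\<^sup>2 > 0" using z0 by (simp add: sum_power2_gt_zero_iff)
    have "g z = \<mu> * (ln ((g z)\<^sup>2 + z\<^sup>2) / 2) - ln \<alpha>"
      using gam_eq[of \<mu> z \<alpha>] that z0 unfolding g_def by (simp add: lc_eq)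
    hence "2 * (g z + ln \<alpha>) / \<mu> = ln ((g z)\<^sup>2 + z\<^sup>2)" using mu by (simp add: field_simps)
    hence "exp (2 * (g z + ln \<alpha>) / \<mu>) = (g z)\<^sup>2 + z\<^sup>2" using Np by simp
    thus ?thesis unfolding \<psi>_def using z0 by simp
  qed
  have hE: "exp (2 * (x + ln \<alpha>) / \<mu>) = x\<^sup>2 + y\<^sup>2"
  proof -
    have Np: "x\<^sup>2 + y\<^sup>2 > 0" using y0 by (simp add: sum_power2_gt_zero_iff)
    have "x = \<mu> * (ln (x\<^sup>2 + y\<^sup>2) / 2) - ln \<alpha>"
      using gam_eq[of \<mu> y \<alpha>] y y0 unfolding g_def x_def by (simp add: lc_eq)
    hence "2 * (x + ln \<alpha>) / \<mu> = ln (x\<^sup>2 + y\<^sup>2)" using mu by (simp add: field_simps)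
    thus ?thesis using Np by simp
  qed
  define D where "D = ((x\<^sup>2 + y\<^sup>2) / \<mu> - x) / y"
  have e: "DERIV (\<lambda>t. exp (2 * (t + ln \<alpha>) / \<mu>) - t\<^sup>2) x :> exp (2 * (x + ln \<alpha>) / \<mu>) * (2 / \<mu>) - 2 * x"
    using mu by (auto intro!: derivative_eq_intros)
  have pos: "0 < exp (2 * (x + ln \<alpha>) / \<mu>) - x\<^sup>2" using hE y0 by simp
  have der0: "DERIV \<psi> x :> inverse (sqrt (exp (2 * (x + ln \<alpha>) / \<mu>) - x\<^sup>2)) / 2 * (exp (2 * (x + ln \<alpha>) / \<mu>) * (2 / \<mu>) - 2 * x)"
    unfolding \<psi>_def by (rule DERIV_chain2[where f=sqrt, OF DERIV_real_sqrt[OF pos] e])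
  have "inverse (sqrt (exp (2 * (x + ln \<alpha>) / \<mu>) - x\<^sup>2)) / 2 * (exp (2 * (x + ln \<alpha>) / \<mu>) * (2 / \<mu>) - 2 * x) = D"
    unfolding hE D_def using y0 mu by (simp add: field_simps)
  with der0 have der: "DERIV \<psi> x :> D" by simp
  have dp: "(x\<^sup>2 + y\<^sup>2) / 2 < x\<^sup>2 + y\<^sup>2 - \<mu> * x" using den_pos[of \<mu> y x] y by simp
  have "x\<^sup>2 + y\<^sup>2 > 0" using y0 by (simp add: sum_power2_gt_zero_iff)
  hence "0 < (x\<^sup>2 + y\<^sup>2) / 2" by simp
  hence "0 < x\<^sup>2 + y\<^sup>2 - \<mu> * x" using dp by (rule less_trans)
  hence "x\<^sup>2 + y\<^sup>2 - \<mu> * x \<noteq> 0" by simp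
  hence Dnz: "D \<noteq> 0" unfolding D_def using mu y0 by (simp add: field_simps)
  have "DERIV g y :> inverse D"
    by (rule DERIV_inverse_function[where g=g and x=y and a="\<bar>\<mu>\<bar>" and b="y+1", OF der[unfolded x_def] Dnz])
       (use y inv gam_isCont[OF mu, of y \<alpha>] g_def in auto)
  moreover have "inverse D = \<mu> * y / (x\<^sup>2 + y\<^sup>2 - \<mu> * x)"
    unfolding D_def using mu y0 \<open>x\<^sup>2 + y\<^sup>2 - \<mu> * x \<noteq> 0\<close> by (simp add: field_simps)
  ultimately show ?thesis unfolding g_def x_def by simp
qed

lemma gam_deriv:
  assumes mu: "\<mu> \<noteq> 0" and y: "\<bar>\<mu>\<bar> < \<bar>y\<bar>" and a: "\<alpha> > 0"
  shows "DERIV (gam \<mu> \<alpha>) y :> \<mu> * y / ((gam \<mu> \<alpha> y)\<^sup>2 + y\<^sup>2 - \<mu> * gam \<mu> \<alpha> y)"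
proof (cases "y > 0")
  case True then show ?thesis using gam_deriv_pos[OF mu _ a] y by auto
next
  case False
  hence y': "\<bar>\<mu>\<bar> < -y" using y by auto
  have d: "DERIV (gam \<mu> \<alpha>) (-y) :> \<mu> * (-y) / ((gam \<mu> \<alpha> (-y))\<^sup>2 + (-y)\<^sup>2 - \<mu> * gam \<mu> \<alpha> (-y))"
    by (rule gam_deriv_pos[OF mu y' a])
  have "DERIV (\<lambda>z. gam \<mu> \<alpha> (-z)) y :> (\<mu> * (-y) / ((gam \<mu> \<alpha> (-y))\<^sup>2 + (-y)\<^sup>2 - \<mu> * gam \<mu> \<alpha> (-y))) * (-1)"
    by (rule DERIV_chain2[where g="\<lambda>z. -z" and x=y, OF d]) (auto intro!: derivative_eq_intros)
  moreover have "(\<lambda>z. gam \<mu> \<alpha> (-z)) = gam \<mu> \<alpha>" by (simp add: gam_neg)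
  ultimately show ?thesis by (simp add: gam_neg)
qed



lemma G_bound:
  assumes mu: "\<mu> \<noteq> 0" and y: "2 * \<bar>\<mu>\<bar> \<le> \<bar>y::real\<bar>"
  shows "\<bar>\<mu> * y / (x\<^sup>2 + y\<^sup>2 - \<mu> * x)\<bar> \<le> 2 * \<bar>\<mu>\<bar> / \<bar>y\<bar>"
proof -
  have y0: "y \<noteq> 0" using y mu by auto
  have N: "x\<^sup>2 + y\<^sup>2 > 0" using y0 by (simp add: sum_power2_gt_zero_iff)
  have k: "\<bar>\<mu>\<bar> / (2 * \<bar>y\<bar>) \<le> 1/4" using y y0 by (simp add: field_simps)
  have "\<bar>\<mu>\<bar> / (2 * \<bar>y\<bar>) * (x\<^sup>2 + y\<^sup>2) \<le> 1/4 * (x\<^sup>2 + y\<^sup>2)"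
    by (rule mult_right_mono[OF k]) (use N in simp)
  moreover have "\<mu> * x \<le> \<bar>\<mu> * x\<bar>" by (rule abs_ge_self)
  ultimately have "\<mu> * x \<le> 1/4 * (x\<^sup>2 + y\<^sup>2)" using mux_bound[OF y0, of \<mu> x] by linarith
  moreover have "0 \<le> x\<^sup>2" "0 \<le> y\<^sup>2" by simp_all
  ultimately have den: "y\<^sup>2 \<le> 2 * (x\<^sup>2 + y\<^sup>2 - \<mu> * x)" by argo
  have dpos: "0 < x\<^sup>2 + y\<^sup>2 - \<mu> * x" using N \<open>\<mu> * x \<le> 1/4 * (x\<^sup>2 + y\<^sup>2)\<close> by argo
  have "\<bar>\<mu>\<bar> * (\<bar>y\<bar> * \<bar>y\<bar>) \<le> \<bar>\<mu>\<bar> * (2 * (x\<^sup>2 + y\<^sup>2 - \<mu> * x))"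
    by (rule mult_left_mono) (use den in \<open>simp_all add: power2_eq_square abs_mult[symmetric]\<close>)
  hence "\<bar>\<mu>\<bar> * \<bar>y\<bar> / (x\<^sup>2 + y\<^sup>2 - \<mu> * x) \<le> 2 * \<bar>\<mu>\<bar> / \<bar>y\<bar>"
    using dpos y0 by (simp add: field_simps)
  thus ?thesis using dpos by (simp add: abs_mult)
qed

lemma gam_diff:
  assumes a: "\<alpha> > 0" and b: "\<beta> > 0" and y: "\<mu> = 0 \<or> \<bar>\<mu>\<bar> < \<bar>y\<bar>"
  shows "\<bar>(gam \<mu> \<beta> y - gam \<mu> \<alpha> y) - ln (\<alpha>/\<beta>)\<bar> \<le> \<bar>\<mu>\<bar> / (2 * \<bar>y\<bar>) * \<bar>gam \<mu> \<beta> y - gam \<mu> \<alpha> y\<bar>"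
proof -
  have L: "ln (\<alpha>/\<beta>) = ln \<alpha> - ln \<beta>" using a b by (simp add: ln_div)
  show ?thesis
  proof (cases "\<mu> = 0")
    case True then show ?thesis using L by (simp add: gam_zero)
  next
    case False
    hence y': "\<bar>\<mu>\<bar> < \<bar>y\<bar>" using y by auto
    have e1: "gam \<mu> \<beta> y = \<mu> * ln (cmod (Complex (gam \<mu> \<beta> y) y)) - ln \<beta>" using gam_eq y by blast
    have e2: "gam \<mu> \<alpha> y = \<mu> * ln (cmod (Complex (gam \<mu> \<alpha> y) y)) - ln \<alpha>" using gam_eq y by blast
    have "(gam \<mu> \<beta> y - gam \<mu> \<alpha> y) - ln (\<alpha>/\<beta>) = \<mu> * ln (cmod (Complex (gam \<mu> \<beta> y) y)) - \<mu> * ln (cmod (Complex (gam \<mu> \<alpha> y) y))"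
      using e1 e2 L by linarith
    thus ?thesis using Phi_lip[OF y', of "gam \<mu> \<beta> y" "gam \<mu> \<alpha> y"] by simp
  qed
qed

lemma arith4: "\<bar>d - L\<bar> \<le> (t::real) \<Longrightarrow> t \<le> \<bar>d\<bar> / 4 \<Longrightarrow> 0 < L \<Longrightarrow> 2/3 * L \<le> d \<and> d \<le> 2 * L"
  by linarith

lemma gdom_k: "y \<in> gdom \<mu> \<Longrightarrow> \<bar>\<mu>\<bar> / (2 * \<bar>y\<bar>) \<le> 1/4"
  by (cases "y = 0") (auto simp: gdom_def field_simps)

lemma gdom_ok: "y \<in> gdom \<mu> \<Longrightarrow> \<mu> = 0 \<or> \<bar>\<mu>\<bar> < \<bar>y\<bar>"
  by (auto simp: gdom_def)

lemma diff_bounds: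
  assumes "\<alpha> > \<beta>" "\<beta> > 0" "y \<in> gdom \<mu>"
  shows "2/3 * ln (\<alpha>/\<beta>) \<le> gam \<mu> \<beta> y - gam \<mu> \<alpha> y \<and> gam \<mu> \<beta> y - gam \<mu> \<alpha> y \<le> 2 * ln (\<alpha>/\<beta>)"
proof -
  have L: "0 < ln (\<alpha>/\<beta>)" using assms by simp
  have k: "\<bar>\<mu>\<bar> / (2 * \<bar>y\<bar>) * \<bar>gam \<mu> \<beta> y - gam \<mu> \<alpha> y\<bar> \<le> \<bar>gam \<mu> \<beta> y - gam \<mu> \<alpha> y\<bar> / 4"
    using mult_right_mono[OF gdom_k[OF assms(3)], of "\<bar>gam \<mu> \<beta> y - gam \<mu> \<alpha> y\<bar>"] by simp
  show ?thesis
    by (rule arith4[OF gam_diff[OF _ assms(2) gdom_ok[OF assms(3)]] k L]) (use assms in auto)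
qed

lemma diff_lim:
  assumes ab: "\<alpha> > \<beta>" "\<beta> > 0"
  shows "((\<lambda>y. gam \<mu> \<beta> y - gam \<mu> \<alpha> y) \<longlongrightarrow> ln (\<alpha>/\<beta>)) at_infinity"
proof -
  define L where "L = ln (\<alpha>/\<beta>)"
  have Lp: "0 < L" using ab by (simp add: L_def)
  have ev: "eventually (\<lambda>y. norm ((gam \<mu> \<beta> y - gam \<mu> \<alpha> y) - L) \<le> \<bar>(\<bar>\<mu>\<bar> * (2 * L) / 2) / y\<bar>) at_infinity"
    unfolding eventually_at_infinity
  proof (intro exI allI impI)
    fix y :: real assume "2 * \<bar>\<mu>\<bar> + 1 \<le> norm y"
    hence yd: "y \<in> gdom \<mu>" and y0: "y \<noteq> 0" by (auto simp: gdom_def)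
    have db: "\<bar>gam \<mu> \<beta> y - gam \<mu> \<alpha> y\<bar> \<le> 2 * L"
      using diff_bounds[OF ab yd] Lp unfolding L_def by auto
    have "norm ((gam \<mu> \<beta> y - gam \<mu> \<alpha> y) - L) \<le> \<bar>\<mu>\<bar> / (2 * \<bar>y\<bar>) * \<bar>gam \<mu> \<beta> y - gam \<mu> \<alpha> y\<bar>"
      using gam_diff[OF _ ab(2) gdom_ok[OF yd], of \<alpha>] ab unfolding L_def by simp
    also have "\<dots> \<le> \<bar>\<mu>\<bar> / (2 * \<bar>y\<bar>) * (2 * L)"
      by (rule mult_left_mono[OF db]) simp
    also have "\<dots> = \<bar>(\<bar>\<mu>\<bar> * (2 * L) / 2) / y\<bar>" using Lp y0 by (simp add: abs_mult)
    finally show "norm ((gam \<mu> \<beta> y - gam \<mu> \<alpha> y) - L) \<le> \<bar>(\<bar>\<mu>\<bar> * (2 * L) / 2) / y\<bar>" .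
  qed
  have t: "((\<lambda>y::real. \<bar>(\<bar>\<mu>\<bar> * (2 * L) / 2) / y\<bar>) \<longlongrightarrow> 0) at_infinity"
    by (rule tendsto_rabs_zero[OF tendsto_divide_0[OF tendsto_const filterlim_ident]])
  have "((\<lambda>y. (gam \<mu> \<beta> y - gam \<mu> \<alpha> y) - L) \<longlongrightarrow> 0) at_infinity"
    by (rule Lim_null_comparison[OF ev t])
  thus ?thesis unfolding L_def by (simp add: LIM_zero_iff)
qed

lemma gam_lower:
  assumes "\<alpha> > 0" "\<mu> \<noteq> 0" "\<bar>\<mu>\<bar> < \<bar>y\<bar>"
  shows "ln \<bar>y\<bar> \<le> ln (cmod (Complex (gam \<mu> \<alpha> y) y))"
proof -
  have "\<bar>y\<bar> \<le> cmod (Complex (gam \<mu> \<alpha> y) y)" using abs_Im_le_cmod[of "Complex (gam \<mu> \<alpha> y) y"] by simp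
  moreover have "0 < \<bar>y\<bar>" using assms by auto
  ultimately show ?thesis by (subst ln_le_cancel_iff) auto
qed

lemma ln_ge_exp: "exp a \<le> (t::real) \<Longrightarrow> a \<le> ln t"
  by (metis exp_gt_zero less_le_trans ln_exp ln_le_cancel_iff)

lemma lim_top:
  assumes a: "\<alpha> > 0" and mu: "\<mu> > 0"
  shows "filterlim (gam \<mu> \<alpha>) at_top at_infinity"
  unfolding filterlim_at_top eventually_at_infinity
proof (rule allI, rule_tac x="max (2 * \<bar>\<mu>\<bar> + 1) (exp ((Z + ln \<alpha>) / \<mu>))" in exI, intro allI impI)
  fix Z y :: real assume h: "max (2 * \<bar>\<mu>\<bar> + 1) (exp ((Z + ln \<alpha>) / \<mu>)) \<le> norm y"
  have y: "\<bar>\<mu>\<bar> < \<bar>y\<bar>" using h by auto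
  have "(Z + ln \<alpha>) / \<mu> \<le> ln \<bar>y\<bar>" using h by (intro ln_ge_exp) auto
  also have "\<dots> \<le> ln (cmod (Complex (gam \<mu> \<alpha> y) y))" using gam_lower[OF a _ y] mu by auto
  finally have "\<mu> * ((Z + ln \<alpha>) / \<mu>) \<le> \<mu> * ln (cmod (Complex (gam \<mu> \<alpha> y) y))"
    using mu by (intro mult_left_mono) auto
  hence "Z + ln \<alpha> \<le> \<mu> * ln (cmod (Complex (gam \<mu> \<alpha> y) y))" using mu by simp
  moreover have "gam \<mu> \<alpha> y = \<mu> * ln (cmod (Complex (gam \<mu> \<alpha> y) y)) - ln \<alpha>" using gam_eq y by blast
  ultimately show "Z \<le> gam \<mu> \<alpha> y" by linarith
qed

lemma lim_bot:
  assumes a: "\<alpha> > 0" and mu: "\<mu> < 0"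
  shows "filterlim (gam \<mu> \<alpha>) at_bot at_infinity"
  unfolding filterlim_at_bot eventually_at_infinity
proof (rule allI, rule_tac x="max (2 * \<bar>\<mu>\<bar> + 1) (exp ((Z + ln \<alpha>) / \<mu>))" in exI, intro allI impI)
  fix Z y :: real assume h: "max (2 * \<bar>\<mu>\<bar> + 1) (exp ((Z + ln \<alpha>) / \<mu>)) \<le> norm y"
  have y: "\<bar>\<mu>\<bar> < \<bar>y\<bar>" using h by auto
  have "(Z + ln \<alpha>) / \<mu> \<le> ln \<bar>y\<bar>" using h by (intro ln_ge_exp) auto
  also have "\<dots> \<le> ln (cmod (Complex (gam \<mu> \<alpha> y) y))" using gam_lower[OF a _ y] mu by auto
  finally have "\<mu> * ln (cmod (Complex (gam \<mu> \<alpha> y) y)) \<le> \<mu> * ((Z + ln \<alpha>) / \<mu>)"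
    using mu by (intro mult_left_mono_neg) auto
  hence "\<mu> * ln (cmod (Complex (gam \<mu> \<alpha> y) y)) \<le> Z + ln \<alpha>" using mu by simp
  moreover have "gam \<mu> \<alpha> y = \<mu> * ln (cmod (Complex (gam \<mu> \<alpha> y) y)) - ln \<alpha>" using gam_eq y by blast
  ultimately show "gam \<mu> \<alpha> y \<le> Z" by linarith
qed



theorem lemma5p2:
  fixes \<mu> :: real
  shows
    \<comment> \<open>well-definedness\<close>
    "(\<forall>\<alpha>>0. \<forall>y\<in>gdom \<mu>. \<exists>!x. x = \<mu> * ln (cmod (Complex x y)) - ln \<alpha>)
     \<and> (\<exists>G' :: real \<Rightarrow> real \<Rightarrow> real.
        \<comment> \<open>(i) continuously differentiable on the domain\<close>
        (\<forall>\<alpha>>0. (\<forall>y\<in>gdom \<mu>. (gam \<mu> \<alpha> has_real_derivative G' \<alpha> y) (at y within gdom \<mu>))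
                 \<and> continuous_on (gdom \<mu>) (G' \<alpha>))
        \<comment> \<open>(iii) derivative bound and uniform decay\<close>
      \<and> (\<forall>\<alpha>>0. \<forall>y\<in>gdom \<mu>. y \<noteq> 0 \<longrightarrow> \<bar>G' \<alpha> y\<bar> \<le> 2 * \<bar>\<mu>\<bar> / \<bar>y\<bar>)
      \<and> (\<forall>\<epsilon>>0. \<exists>R. \<forall>\<alpha>>0. \<forall>y\<in>gdom \<mu>. \<bar>y\<bar> \<ge> R \<longrightarrow> \<bar>G' \<alpha> y\<bar> < \<epsilon>))
     \<comment> \<open>(ii) behaviour as |y| tends to infinity\<close>
     \<and> (\<forall>\<alpha>>0. (\<mu> > 0 \<longrightarrow> filterlim (gam \<mu> \<alpha>) at_top at_infinity)
              \<and> (\<mu> < 0 \<longrightarrow> filterlim (gam \<mu> \<alpha>) at_bot at_infinity)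
              \<and> (\<mu> = 0 \<longrightarrow> (\<forall>y\<in>gdom \<mu>. gam \<mu> \<alpha> y = - ln \<alpha>)))
     \<comment> \<open>(iv) comparison for alpha > beta > 0\<close>
     \<and> (\<forall>\<alpha> \<beta>. \<alpha> > \<beta> \<and> \<beta> > 0 \<longrightarrow>
          (\<forall>y\<in>gdom \<mu>. 2/3 * ln (\<alpha>/\<beta>) \<le> gam \<mu> \<beta> y - gam \<mu> \<alpha> y
                        \<and> gam \<mu> \<beta> y - gam \<mu> \<alpha> y \<le> 2 * ln (\<alpha>/\<beta>))
          \<and> ((\<lambda>y. gam \<mu> \<beta> y - gam \<mu> \<alpha> y) \<longlongrightarrow> ln (\<alpha>/\<beta>)) at_infinity)"
proof -
  define G' where "G' = (\<lambda>\<alpha> y. \<mu> * y / ((gam \<mu> \<alpha> y)\<^sup>2 + y\<^sup>2 - \<mu> * gam \<mu> \<alpha> y))"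
  have P0: "\<forall>\<alpha>>0. \<forall>y\<in>gdom \<mu>. \<exists>!x. x = \<mu> * ln (cmod (Complex x y)) - ln \<alpha>"
    by (intro allI impI ballI ex1_sol gdom_ok)
  have P1: "\<forall>\<alpha>>0. (\<forall>y\<in>gdom \<mu>. (gam \<mu> \<alpha> has_real_derivative G' \<alpha> y) (at y within gdom \<mu>))
                 \<and> continuous_on (gdom \<mu>) (G' \<alpha>)"
  proof (intro allI impI conjI ballI)
    fix \<alpha> y :: real assume a: "\<alpha> > 0" and y: "y \<in> gdom \<mu>"
    show "(gam \<mu> \<alpha> has_real_derivative G' \<alpha> y) (at y within gdom \<mu>)"
    proof (cases "\<mu> = 0")
      case True
      have "gam \<mu> \<alpha> = (\<lambda>_. - ln \<alpha>)" using True by (simp add: gam_zero fun_eq_iff)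
      thus ?thesis using True unfolding G'_def by simp
    next
      case False
      have "\<bar>\<mu>\<bar> < \<bar>y\<bar>" using gdom_ok[OF y] False by auto
      thus ?thesis unfolding G'_def by (rule has_field_derivative_at_within[OF gam_deriv[OF False _ a]])
    qed
  next
    fix \<alpha> :: real assume a: "\<alpha> > 0"
    show "continuous_on (gdom \<mu>) (G' \<alpha>)"
    proof (cases "\<mu> = 0")
      case True
      hence "G' \<alpha> = (\<lambda>_. 0)" unfolding G'_def by (simp add: fun_eq_iff)
      thus ?thesis by simp
    next
      case False
      show ?thesis
      proof (rule continuous_at_imp_continuous_on, rule ballI)
        fix y assume y: "y \<in> gdom \<mu>"
        have y': "\<bar>\<mu>\<bar> < \<bar>y\<bar>" using gdom_ok[OF y] False by auto
        have c: "isCont (gam \<mu> \<alpha>) y" by (rule gam_isCont[OF False y'])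
        have "(gam \<mu> \<alpha> y)\<^sup>2 + y\<^sup>2 - \<mu> * gam \<mu> \<alpha> y > 0"
        proof -
          have "y \<noteq> 0" using y' by auto
          hence "0 < (gam \<mu> \<alpha> y)\<^sup>2 + y\<^sup>2" by (simp add: sum_power2_gt_zero_iff)
          hence "0 < ((gam \<mu> \<alpha> y)\<^sup>2 + y\<^sup>2) / 2" by simp
          thus ?thesis using den_pos[OF y', of "gam \<mu> \<alpha> y"] by (rule less_trans)
        qed
        thus "isCont (G' \<alpha>) y" unfolding G'_def using c by (auto intro!: continuous_intros)
      qed
    qed
  qed
  have P3: "\<forall>\<alpha>>0. \<forall>y\<in>gdom \<mu>. y \<noteq> 0 \<longrightarrow> \<bar>G' \<alpha> y\<bar> \<le> 2 * \<bar>\<mu>\<bar> / \<bar>y\<bar>"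
  proof (intro allI impI ballI)
    fix \<alpha> y :: real assume "\<alpha> > 0" "y \<in> gdom \<mu>" "y \<noteq> 0"
    thus "\<bar>G' \<alpha> y\<bar> \<le> 2 * \<bar>\<mu>\<bar> / \<bar>y\<bar>"
      unfolding G'_def using G_bound[of \<mu> y] by (cases "\<mu> = 0") (auto simp: gdom_def)
  qed
  have P4: "\<forall>\<epsilon>>0. \<exists>R. \<forall>\<alpha>>0. \<forall>y\<in>gdom \<mu>. \<bar>y\<bar> \<ge> R \<longrightarrow> \<bar>G' \<alpha> y\<bar> < \<epsilon>"
  proof (intro allI impI)
    fix \<epsilon> :: real assume e: "\<epsilon> > 0"
    show "\<exists>R. \<forall>\<alpha>>0. \<forall>y\<in>gdom \<mu>. \<bar>y\<bar> \<ge> R \<longrightarrow> \<bar>G' \<alpha> y\<bar> < \<epsilon>"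
    proof (intro exI[of _ "2 * \<bar>\<mu>\<bar> / \<epsilon> + 1"] allI impI ballI)
      fix \<alpha> y :: real assume a: "\<alpha> > 0" and y: "y \<in> gdom \<mu>" and R: "2 * \<bar>\<mu>\<bar> / \<epsilon> + 1 \<le> \<bar>y\<bar>"
      have y0: "y \<noteq> 0" proof -
        have "0 \<le> 2 * \<bar>\<mu>\<bar> / \<epsilon>" using e by simp
        thus ?thesis using R by auto
      qed
      have "\<bar>G' \<alpha> y\<bar> \<le> 2 * \<bar>\<mu>\<bar> / \<bar>y\<bar>" using P3 a y y0 by blast
      also have "2 * \<bar>\<mu>\<bar> / \<bar>y\<bar> < \<epsilon>"
      proof -
        have "2 * \<bar>\<mu>\<bar> < \<epsilon> * \<bar>y\<bar>"
        proof -
          have "2 * \<bar>\<mu>\<bar> = \<epsilon> * (2 * \<bar>\<mu>\<bar> / \<epsilon>)" using e by simp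
          also have "\<dots> < \<epsilon> * \<bar>y\<bar>" using R e by (intro mult_strict_left_mono) auto
          finally show ?thesis .
        qed
        thus ?thesis using y0 by (simp add: divide_less_eq)
      qed
      finally show "\<bar>G' \<alpha> y\<bar> < \<epsilon>" .
    qed
  qed
  have P2: "\<forall>\<alpha>>0. (\<mu> > 0 \<longrightarrow> filterlim (gam \<mu> \<alpha>) at_top at_infinity)
              \<and> (\<mu> < 0 \<longrightarrow> filterlim (gam \<mu> \<alpha>) at_bot at_infinity)
              \<and> (\<mu> = 0 \<longrightarrow> (\<forall>y\<in>gdom \<mu>. gam \<mu> \<alpha> y = - ln \<alpha>))"
    using lim_top lim_bot gam_zero by blast
  have P5: "\<forall>\<alpha> \<beta>. \<alpha> > \<beta> \<and> \<beta> > 0 \<longrightarrow>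
          (\<forall>y\<in>gdom \<mu>. 2/3 * ln (\<alpha>/\<beta>) \<le> gam \<mu> \<beta> y - gam \<mu> \<alpha> y
                        \<and> gam \<mu> \<beta> y - gam \<mu> \<alpha> y \<le> 2 * ln (\<alpha>/\<beta>))
          \<and> ((\<lambda>y. gam \<mu> \<beta> y - gam \<mu> \<alpha> y) \<longlongrightarrow> ln (\<alpha>/\<beta>)) at_infinity"
    using diff_bounds diff_lim by blast
  have PG: "\<exists>G' :: real \<Rightarrow> real \<Rightarrow> real.
        (\<forall>\<alpha>>0. (\<forall>y\<in>gdom \<mu>. (gam \<mu> \<alpha> has_real_derivative G' \<alpha> y) (at y within gdom \<mu>))
                 \<and> continuous_on (gdom \<mu>) (G' \<alpha>))
      \<and> (\<forall>\<alpha>>0. \<forall>y\<in>gdom \<mu>. y \<noteq> 0 \<longrightarrow> \<bar>G' \<alpha> y\<bar> \<le> 2 * \<bar>\<mu>\<bar> / \<bar>y\<bar>)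
      \<and> (\<forall>\<epsilon>>0. \<exists>R. \<forall>\<alpha>>0. \<forall>y\<in>gdom \<mu>. \<bar>y\<bar> \<ge> R \<longrightarrow> \<bar>G' \<alpha> y\<bar> < \<epsilon>)"
    by (rule exI[of _ G'], intro conjI P1 P3 P4)
  show ?thesis by (intro conjI P0 PG P2 P5)
qed


end
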